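(* Let $\alpha=(\alpha_\pi)_{\pi\in\mathcal P}$ be monic, singleton inductive weights. Let $A=\bigsqcup_{\mathsf Q\in\mathcal F}A^{\mathsf Q}$ be a multi-faced algebra in which each face $A^{\mathsf Q}$ is unital with unit $1^{\mathsf Q}$, and let $\varphi:A\to\mathbb C$ be linear with $\varphi(1^{\mathsf Q})=1$ for all $\mathsf Q$ and $\varphi$ vanishing on the two-sided ideal generated by $\{1^{\mathsf q}-1^{\mathsf Q}:\mathsf q,\mathsf Q\in\mathcal F\}$. Then $\log_\alpha\hat\varphi(a_1\otimes\cdots\otimes a_n)=0$ whenever $n>1$, $a_\ell\in A^{\mathbf f(\ell)}$ for some $\mathbf f\in\mathcal F^n$, and $a_s=1^{\mathbf f(s)}$ for some $s\in[n]$.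
   Context: Fix a finite set $\mathcal F$ of faces. Algebras are complex associative, not necessarily unital. A multi-faced algebra $A=\bigsqcup_{\mathsf Q}A^{\mathsf Q}$ is an algebra with subalgebras $A^{\mathsf Q}$ such that the canonical homomorphism from their free product to $A$ is an isomorphism. For $\mathbf f\in\mathcal F^n$, $\mathcal P(\mathbf f)$ is the set of set partitions of $[n]$ whose elements $\ell$ carry face $\mathbf f(\ell)$, $\mathcal P=\bigcup_{\mathbf f}\mathcal P(\mathbf f)$; partitions of a subset of $[n]$ (with restricted faces) are identified with elements of $\mathcal P$ via the order-preserving bijection. Weights $\alpha=(\alpha_\pi)_{\pi\in\mathcal P}\subset\mathbb C$ are monic if $\alpha_\pi=1$ for every one-block partition, and singleton inductive if $\alpha_\pi=\alpha_{\pi\setminus\{s\}}$ whenever $\{s\}$ is a singleton block of $\pi$ (where $\pi\setminus\{s\}$ is the partition of $[n]\setminus\{s\}$ obtained by removing that block). Let $V=\bigoplus_{\mathsf Q}A^{\mathsf Q}$ (a vector space graded by faces) and $T_0(V)=\bigoplus_{m\ge1}V^{\otimes m}$ the non-unital tensor algebra; $\mu:T_0(V)\to A$ is the canonical homomorphism and $\hat\varphi=\varphi\circ\mu$. For a linear $\psi$ on $T_0(V)$ define $\exp_\alpha(\psi)(x_1\otimes\cdots\otimes x_m)=\sum_{\pi\in\mathcal P(\mathbf g)}\alpha_\pi\prod_{\beta\in\pi}\psi(x_\beta)$ for $x_i\in V^{\mathbf g(i)}$, where $x_\beta$ is the tensor product of the $x_i$, $i\in\beta$, in increasing order; $\exp_\alpha$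 is a bijection on linear functionals on $T_0(V)$ and $\log_\alpha$ denotes its inverse. *)

theory Defs
  imports Complex_Main "HOL-Library.Disjoint_Sets"
begin

(* The algebra A is the whole type 'a; it is a (not necessarily unital) ring
   (Isabelle class ring = associative, non-unital) together with a complex
   scalar multiplication sm making it a complex associative algebra. *)
definition complex_algebra :: "(complex \<Rightarrow> 'a::ring \<Rightarrow> 'a) \<Rightarrow> bool" where
  "complex_algebra sm \<longleftrightarrow>
     (\<forall>c x y. sm c (x + y) = sm c x + sm c y) \<and>
     (\<forall>c d x. sm (c + d) x = sm c x + sm d x) \<and>
     (\<forall>c d x. sm c (sm d x) = sm (c * d) x) \<and>
     (\<forall>x. sm 1 x = x) \<and>
     (\<forall>c x y. sm c (x * y) = sm c x * y) \<and>
     (\<forall>c x y. sm c (x * y) = x * sm c y)"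

definition subalgebra :: "(complex \<Rightarrow> 'a::ring \<Rightarrow> 'a) \<Rightarrow> 'a set \<Rightarrow> bool" where
  "subalgebra sm B \<longleftrightarrow> 0 \<in> B \<and>
     (\<forall>x\<in>B. \<forall>y\<in>B. x + y \<in> B \<and> x * y \<in> B) \<and>
     (\<forall>c. \<forall>x\<in>B. sm c x \<in> B)"

definition is_ideal :: "(complex \<Rightarrow> 'a::ring \<Rightarrow> 'a) \<Rightarrow> 'a set \<Rightarrow> bool" where
  "is_ideal sm I \<longleftrightarrow> 0 \<in> I \<and>
     (\<forall>x\<in>I. \<forall>y\<in>I. x + y \<in> I) \<and>
     (\<forall>c. \<forall>x\<in>I. sm c x \<in> I) \<and>
     (\<forall>x\<in>I. \<forall>a. a * x \<in> I \<and> x * a \<in> I)"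

definition ideal_generated :: "(complex \<Rightarrow> 'a::ring \<Rightarrow> 'a) \<Rightarrow> 'a set \<Rightarrow> 'a set" where
  "ideal_generated sm G = \<Inter>{I. is_ideal sm I \<and> G \<subseteq> I}"

definition linear_functional :: "(complex \<Rightarrow> 'a::ring \<Rightarrow> 'a) \<Rightarrow> ('a \<Rightarrow> complex) \<Rightarrow> bool" where
  "linear_functional sm \<phi> \<longleftrightarrow>
     (\<forall>x y. \<phi> (x + y) = \<phi> x + \<phi> y) \<and> (\<forall>c x. \<phi> (sm c x) = c * \<phi> x)"

fun lprod :: "'a::ring list \<Rightarrow> 'a" where
  "lprod [] = 0"
| "lprod [x] = x"
| "lprod (x # y # xs) = x * lprod (y # xs)"

(* A simple tensor x_1 \<otimes> ... \<otimes> x_m in T_0(V), V = \<Oplus>_Q A^Q, with x_i \<in> V^{g(i)},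
   is represented by the list [(g(1),x_1),...,(g(m),x_m)] with x_i \<in> A^{g(i)}, m \<ge> 1. *)
definition admissible :: "('f \<Rightarrow> 'a set) \<Rightarrow> ('f \<times> 'a) list \<Rightarrow> bool" where
  "admissible S w \<longleftrightarrow> w \<noteq> [] \<and> (\<forall>p\<in>set w. snd p \<in> S (fst p))"

definition alternating :: "('f \<Rightarrow> 'a set) \<Rightarrow> ('f \<times> 'a) list \<Rightarrow> bool" where
  "alternating S w \<longleftrightarrow> admissible S w \<and>
     (\<forall>i. Suc i < length w \<longrightarrow> fst (w ! i) \<noteq> fst (w ! Suc i))"

(* A linear functional on T_0(V) is represented by its values on simple tensors:
   a family of functionals multilinear in each slot (for each face sequence),
   set to 0 on non-admissible lists. *)
definition T0_functional :: "(complex \<Rightarrow> 'a::ring \<Rightarrow> 'a) \<Rightarrow> ('f \<Rightarrow> 'a set)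
     \<Rightarrow> (('f \<times> 'a) list \<Rightarrow> complex) \<Rightarrow> bool" where
  "T0_functional sm S \<psi> \<longleftrightarrow>
     (\<forall>w. \<not> admissible S w \<longrightarrow> \<psi> w = 0) \<and>
     (\<forall>u v q a b c. a \<in> S q \<longrightarrow> b \<in> S q \<longrightarrow>
        \<psi> (u @ (q, sm c a + b) # v) = c * \<psi> (u @ (q, a) # v) + \<psi> (u @ (q, b) # v))"

(* Free product condition: the canonical homomorphism from the free product
   \<Oplus>_{alternating Q_1..Q_m} A^{Q_1} \<otimes> ... \<otimes> A^{Q_m} to A (given by multiplication)
   is (i) surjective and (ii) injective; (ii) is expressed dually: every linear
   functional on the free product factors through A. *)
definition free_product :: "(complex \<Rightarrow> 'a::ring \<Rightarrow> 'a) \<Rightarrow> ('f \<Rightarrow> 'a set) \<Rightarrow> bool" where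
  "free_product sm S \<longleftrightarrow>
     (\<forall>x. \<exists>ws. (\<forall>w\<in>set ws. alternating S w) \<and> x = sum_list (map (\<lambda>w. lprod (map snd w)) ws)) \<and>
     (\<forall>\<psi>. T0_functional sm S \<psi> \<longrightarrow>
        (\<exists>\<phi>. linear_functional sm \<phi> \<and>
             (\<forall>w. alternating S w \<longrightarrow> \<phi> (lprod (map snd w)) = \<psi> w)))"

definition multi_faced :: "(complex \<Rightarrow> 'a::ring \<Rightarrow> 'a) \<Rightarrow> ('f \<Rightarrow> 'a set) \<Rightarrow> bool" where
  "multi_faced sm S \<longleftrightarrow> complex_algebra sm \<and> (\<forall>Q. subalgebra sm (S Q)) \<and> free_product sm S"

(* Weights: alpha f \<pi> for a face list f (length n) and a set partition \<pi> of {0..<n}. *)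
definition monic_weights :: "('f list \<Rightarrow> nat set set \<Rightarrow> complex) \<Rightarrow> bool" where
  "monic_weights \<alpha> \<longleftrightarrow> (\<forall>f. f \<noteq> [] \<longrightarrow> \<alpha> f {{0..<length f}} = 1)"

(* order-preserving bijection from a finite set T \<subseteq> nat onto {0..<card T} *)
definition std_idx :: "nat set \<Rightarrow> nat \<Rightarrow> nat" where
  "std_idx T x = card {y\<in>T. y < x}"

definition singleton_inductive :: "('f list \<Rightarrow> nat set set \<Rightarrow> complex) \<Rightarrow> bool" where
  "singleton_inductive \<alpha> \<longleftrightarrow>
     (\<forall>f \<pi> s. partition_on {0..<length f} \<pi> \<longrightarrow> {s} \<in> \<pi> \<longrightarrow> length f > 1 \<longrightarrow>
        \<alpha> f \<pi> = \<alpha> (nths f ({0..<length f} - {s}))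
                   ((\<lambda>B. std_idx ({0..<length f} - {s}) ` B) ` (\<pi> - {{s}})))"

definition exp_alpha :: "('f \<Rightarrow> 'a set) \<Rightarrow> ('f list \<Rightarrow> nat set set \<Rightarrow> complex)
     \<Rightarrow> (('f \<times> 'a) list \<Rightarrow> complex) \<Rightarrow> ('f \<times> 'a) list \<Rightarrow> complex" where
  "exp_alpha S \<alpha> \<psi> w = (if admissible S w then
     (\<Sum>\<pi>\<in>{\<pi>. partition_on {0..<length w} \<pi>}. \<alpha> (map fst w) \<pi> * (\<Prod>B\<in>\<pi>. \<psi> (nths w B)))
     else 0)"

definition log_alpha :: "(complex \<Rightarrow> 'a::ring \<Rightarrow> 'a) \<Rightarrow> ('f \<Rightarrow> 'a set) \<Rightarrow> ('f list \<Rightarrow> nat set set \<Rightarrow> complex)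
     \<Rightarrow> (('f \<times> 'a) list \<Rightarrow> complex) \<Rightarrow> ('f \<times> 'a) list \<Rightarrow> complex" where
  "log_alpha sm S \<alpha> \<psi> = (THE \<chi>. T0_functional sm S \<chi> \<and> exp_alpha S \<alpha> \<chi> = \<psi>)"

definition phi_hat :: "('f \<Rightarrow> 'a set) \<Rightarrow> ('a::ring \<Rightarrow> complex) \<Rightarrow> ('f \<times> 'a) list \<Rightarrow> complex" where
  "phi_hat S \<phi> w = (if admissible S w then \<phi> (lprod (map snd w)) else 0)"

end

theory Submission
  imports Defs
begin


lemma lprod_Cons: "l \<noteq> [] \<Longrightarrow> lprod (x # l) = x * lprod l"
  by (cases l) auto

lemma lprod_append: "u \<noteq> [] \<Longrightarrow> v \<noteq> [] \<Longrightarrow> lprod (u @ v) = lprod u * lprod v"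
proof (induction u)
  case (Cons x u)
  then show ?case
    by (cases "u = []") (auto simp: lprod_Cons mult.assoc)
qed simp

lemma lprod_lin:
  assumes "complex_algebra sm"
  shows "lprod (xs @ (sm c a + b) # ys) = sm c (lprod (xs @ a # ys)) + lprod (xs @ b # ys)"
proof (induction xs)
  case Nil
  then show ?case using assms
    by (cases ys) (auto simp: complex_algebra_def distrib_right)
next
  case (Cons x xs)
  have h: "sm c (x * y) = x * sm c y" for y using assms unfolding complex_algebra_def by blast
  show ?case using Cons
    by (simp add: lprod_Cons distrib_left h)
qed



lemma block_sub: "partition_on A P \<Longrightarrow> B \<in> P \<Longrightarrow> B \<subseteq> A"
  by (auto simp: partition_on_def)

lemma block_ne: "partition_on A P \<Longrightarrow> B \<in> P \<Longrightarrow> B \<noteq> {}"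
  by (auto simp: partition_on_def)

lemma one_block: "partition_on A P \<Longrightarrow> A \<in> P \<Longrightarrow> P = {A}"
proof -
  assume p: "partition_on A P" and a: "A \<in> P"
  have "\<forall>B\<in>P. B = A"
  proof (rule ballI, rule ccontr)
    fix B assume that: "B \<in> P"
    assume "B \<noteq> A"
    moreover have "disjoint P" using p by (rule partition_onD2)
    ultimately have "disjnt B A" using a that unfolding pairwise_def by blast
    moreover have "B \<subseteq> A" "B \<noteq> {}" using p that block_sub block_ne by blast+
    ultimately show False by (auto simp: disjnt_def)
  qed
  then have "P \<subseteq> {A}" by blast
  with a show ?thesis by blast
qed


definition Pstar :: "nat \<Rightarrow> nat set set set" where
  "Pstar n = {P. partition_on {0..<n} P \<and> P \<noteq> {{0..<n}}}"

lemma finite_parts: "finite {P. partition_on {0..<(n::nat)} P}"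
  by (rule finitely_many_partition_on) simp

lemma finite_Pstar: "finite (Pstar n)"
  by (rule finite_subset[OF _ finite_parts]) (auto simp: Pstar_def)

lemma parts_split: "n > 0 \<Longrightarrow> {P. partition_on {0..<n} P} = insert {{0..<n}} (Pstar n)"
proof -
  assume "n > 0"
  then have "partition_on {0..<n} {{0..<n}}" by (intro partition_on_space) simp
  then show ?thesis by (auto simp: Pstar_def)
qed

lemma length_nths_sub: "B \<subseteq> {0..<length w} \<Longrightarrow> length (nths w B) = card B"
  by (simp add: length_nths) (metis (no_types, lifting) Collect_mem_eq Collect_cong atLeastLessThan_iff subsetD zero_le)

lemma Pstar_shorter:
  assumes "P \<in> Pstar (length w)" "B \<in> P"
  shows "length (nths w B) < length w"
proof -
  have p: "partition_on {0..<length w} P" "P \<noteq> {{0..<length w}}" using assms by (auto simp: Pstar_def)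
  have sub: "B \<subseteq> {0..<length w}" using block_sub p assms by blast
  have "B \<noteq> {0..<length w}" using one_block[OF p(1)] p(2) assms(2) by blast
  then have "B \<subset> {0..<length w}" using sub by blast
  then have "card B < length w" using psubset_card_mono[of "{0..<length w}" B] by simp
  then show ?thesis using length_nths_sub[OF sub] by simp
qed


function L :: "('f \<Rightarrow> 'a set) \<Rightarrow> ('f list \<Rightarrow> nat set set \<Rightarrow> complex)
     \<Rightarrow> (('f \<times> 'a) list \<Rightarrow> complex) \<Rightarrow> ('f \<times> 'a) list \<Rightarrow> complex" where
  "L S \<alpha> \<psi> w = (if admissible S w then \<psi> w -
     (\<Sum>P\<in>Pstar (length w). \<alpha> (map fst w) P * (\<Prod>B\<in>P. L S \<alpha> \<psi> (nths w B))) else 0)"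
  by auto
termination
  by (relation "measure (\<lambda>(S,\<alpha>,\<psi>,w). length w)") (auto intro: Pstar_shorter)

declare L.simps[simp del]

lemma exp_L:
  assumes "monic_weights \<alpha>" "\<And>w. \<not> admissible S w \<Longrightarrow> \<psi> w = 0"
  shows "exp_alpha S \<alpha> (L S \<alpha> \<psi>) w = \<psi> w"
proof (cases "admissible S w")
  case True
  then have ne: "w \<noteq> []" by (simp add: admissible_def)
  then have n0: "length w > 0" by simp
  have notin: "{{0..<length w}} \<notin> Pstar (length w)" by (simp add: Pstar_def)
  have a1: "\<alpha> (map fst w) {{0..<length w}} = 1" using assms(1) ne unfolding monic_weights_def by (metis length_map map_is_Nil_conv)
  have nw: "nths w {0..<length w} = w" by (simp add: nths_all)
  show ?thesis
    unfolding exp_alpha_def parts_split[OF n0]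
    using True
    by (simp add: sum.insert[OF finite_Pstar notin] a1 nw L.simps[of S \<alpha> \<psi> w])
next
  case False
  then show ?thesis using assms(2) by (simp add: exp_alpha_def)
qed

lemma L_unique:
  assumes "T0_functional sm S \<chi>" "exp_alpha S \<alpha> \<chi> = \<psi>" "monic_weights \<alpha>"
  shows "\<chi> w = L S \<alpha> \<psi> w"
proof (induction "length w" arbitrary: w rule: less_induct)
  case less
  show ?case
  proof (cases "admissible S w")
    case True
    then have ne: "w \<noteq> []" by (simp add: admissible_def)
    then have n0: "length w > 0" by simp
    have notin: "{{0..<length w}} \<notin> Pstar (length w)" by (simp add: Pstar_def)
    have a1: "\<alpha> (map fst w) {{0..<length w}} = 1" using assms(3) ne unfolding monic_weights_def by (metis length_map map_is_Nil_conv)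
    have nw: "nths w {0..<length w} = w" by (simp add: nths_all)
    have IH: "(\<Sum>P\<in>Pstar (length w). \<alpha> (map fst w) P * (\<Prod>B\<in>P. \<chi> (nths w B))) =
       (\<Sum>P\<in>Pstar (length w). \<alpha> (map fst w) P * (\<Prod>B\<in>P. L S \<alpha> \<psi> (nths w B)))"
      by (intro sum.cong refl arg_cong2[where f="(*)"] prod.cong less Pstar_shorter)
    have "\<psi> w = \<chi> w + (\<Sum>P\<in>Pstar (length w). \<alpha> (map fst w) P * (\<Prod>B\<in>P. \<chi> (nths w B)))"
      unfolding assms(2)[symmetric] exp_alpha_def parts_split[OF n0]
      using True by (simp add: sum.insert[OF finite_Pstar notin] a1 nw)
    then show ?thesis using True IH by (simp add: L.simps[of S \<alpha> \<psi> w])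
  next
    case False
    then show ?thesis using assms(1) by (simp add: T0_functional_def L.simps[of S \<alpha> \<psi> w])
  qed
qed



lemma part_uniq: "partition_on A P \<Longrightarrow> B1 \<in> P \<Longrightarrow> B2 \<in> P \<Longrightarrow> x \<in> B1 \<Longrightarrow> x \<in> B2 \<Longrightarrow> B1 = B2"
  unfolding partition_on_def pairwise_def disjnt_def by blast

lemma part_cover: "partition_on A P \<Longrightarrow> x \<in> A \<Longrightarrow> \<exists>B\<in>P. x \<in> B"
  unfolding partition_on_def by blast

lemma nths_mid_in: "length u \<in> B \<Longrightarrow>
   nths (u @ x # v) B = nths u B @ x # nths v {j. Suc (j + length u) \<in> B}"
  by (simp add: nths_append nths_Cons)

lemma nths_mid_out: "length u \<notin> B \<Longrightarrow> nths (u @ x # v) B = nths (u @ y # v) B"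
  by (simp add: nths_append nths_Cons)

lemma adm_swap: "x \<in> S q \<Longrightarrow> y \<in> S q \<Longrightarrow> admissible S (u @ (q, x) # v) = admissible S (u @ (q, y) # v)"
  by (auto simp: admissible_def)

lemma L_lin:
  assumes T0: "T0_functional sm S \<psi>"
    and cl: "\<And>q c a b. a \<in> S q \<Longrightarrow> b \<in> S q \<Longrightarrow> sm c a + b \<in> S q"
  shows "a \<in> S q \<Longrightarrow> b \<in> S q \<Longrightarrow>
    L S \<alpha> \<psi> (u @ (q, sm c a + b) # v) = c * L S \<alpha> \<psi> (u @ (q, a) # v) + L S \<alpha> \<psi> (u @ (q, b) # v)"
proof (induction "length u + length v" arbitrary: u v rule: less_induct)
  case less
  define z where "z = sm c a + b"
  have zS: "z \<in> S q" using cl less.prems by (simp add: z_def)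
  define W where "W x = u @ (q, x) # v" for x
  have lenW: "length (W x) = length u + length v + 1" for x by (simp add: W_def)
  have mapW: "map fst (W x) = map fst (W a)" for x by (simp add: W_def)
  have adm: "admissible S (W z) = admissible S (W a)" "admissible S (W b) = admissible S (W a)"
    using adm_swap[of z S q a u v] adm_swap[of b S q a u v] zS less.prems by (simp_all add: W_def)
  show ?case
  proof (cases "admissible S (W a)")
    case False
    then show ?thesis using adm unfolding W_def z_def[symmetric]
      by (simp add: L.simps[of S \<alpha> \<psi> "u @ (q, z) # v"] L.simps[of S \<alpha> \<psi> "u @ (q, a) # v"]
            L.simps[of S \<alpha> \<psi> "u @ (q, b) # v"])
  next
    case True
    let ?n = "length u + length v + 1"
    define Pr where "Pr x P = (\<Prod>B\<in>P. L S \<alpha> \<psi> (nths (W x) B))" for x P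
    have key: "Pr z P = c * Pr a P + Pr b P" if P: "P \<in> Pstar ?n" for P
    proof -
      have pp: "partition_on {0..<?n} P" using P by (simp add: Pstar_def)
      have fin: "finite P" using finite_elements[OF _ pp] by simp
      obtain B0 where B0: "B0 \<in> P" "length u \<in> B0" using part_cover[OF pp, of "length u"] by auto
      have out: "length u \<notin> B" if "B \<in> P - {B0}" for B
        using part_uniq[OF pp, of B B0 "length u"] that B0 by auto
      have NW: "nths (W x) B = nths (W a) B" if "B \<in> P - {B0}" for B x
        using out[OF that] unfolding W_def by (rule nths_mid_out)
      have R: "(\<Prod>B\<in>P - {B0}. L S \<alpha> \<psi> (nths (W x) B)) = (\<Prod>B\<in>P - {B0}. L S \<alpha> \<psi> (nths (W a) B))" for x
        by (rule prod.cong[OF refl], rule arg_cong[where f="L S \<alpha> \<psi>"], erule NW)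
      have split: "Pr x P = L S \<alpha> \<psi> (nths (W x) B0) * (\<Prod>B\<in>P - {B0}. L S \<alpha> \<psi> (nths (W a) B))" for x
        unfolding Pr_def R[of x, symmetric] using prod.remove[OF fin B0(1)] by simp
      define u' where "u' = nths u B0"
      define v' where "v' = nths v {j. Suc (j + length u) \<in> B0}"
      have nB0: "nths (W x) B0 = u' @ (q, x) # v'" for x
        by (simp add: W_def u'_def v'_def nths_mid_in[OF B0(2)])
      have "length (nths (W a) B0) < length (W a)"
        using Pstar_shorter[of P "W a" B0] P B0 lenW by simp
      then have shorter: "length u' + length v' < length u + length v"
        using nB0[of a] lenW[of a] by simp
      have "L S \<alpha> \<psi> (nths (W z) B0) = c * L S \<alpha> \<psi> (nths (W a) B0) + L S \<alpha> \<psi> (nths (W b) B0)"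
        unfolding nB0 z_def using less.hyps[OF shorter] less.prems by simp
      then show ?thesis unfolding split by (simp add: algebra_simps)
    qed
    have sumeq: "(\<Sum>P\<in>Pstar ?n. \<alpha> (map fst (W a)) P * Pr z P) =
        c * (\<Sum>P\<in>Pstar ?n. \<alpha> (map fst (W a)) P * Pr a P) + (\<Sum>P\<in>Pstar ?n. \<alpha> (map fst (W a)) P * Pr b P)"
      by (simp add: key sum_distrib_left sum.distrib[symmetric] algebra_simps cong: sum.cong)
    have psi: "\<psi> (W z) = c * \<psi> (W a) + \<psi> (W b)"
      using T0 less.prems unfolding T0_functional_def W_def z_def by blast
    have LW: "L S \<alpha> \<psi> (W x) = \<psi> (W x) - (\<Sum>P\<in>Pstar ?n. \<alpha> (map fst (W a)) P * Pr x P)"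
      if "admissible S (W x)" for x
      using that unfolding Pr_def by (simp add: L.simps[of S \<alpha> \<psi> "W x"] lenW mapW[of x])
    have "L S \<alpha> \<psi> (W z) = c * L S \<alpha> \<psi> (W a) + L S \<alpha> \<psi> (W b)"
    proof -
      have e1: "L S \<alpha> \<psi> (W z) = \<psi> (W z) - (\<Sum>P\<in>Pstar ?n. \<alpha> (map fst (W a)) P * Pr z P)"
        using LW[of z] adm True by simp
      have e2: "L S \<alpha> \<psi> (W a) = \<psi> (W a) - (\<Sum>P\<in>Pstar ?n. \<alpha> (map fst (W a)) P * Pr a P)"
        using LW[of a] adm True by simp
      have e3: "L S \<alpha> \<psi> (W b) = \<psi> (W b) - (\<Sum>P\<in>Pstar ?n. \<alpha> (map fst (W a)) P * Pr b P)"
        using LW[of b] adm True by simp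
      show ?thesis unfolding e1 e2 e3 sumeq psi by (simp add: algebra_simps)
    qed
    then show ?thesis by (simp add: W_def z_def)
  qed
qed

lemma L_T0:
  assumes T0: "T0_functional sm S \<psi>"
    and cl: "\<And>q c a b. a \<in> S q \<Longrightarrow> b \<in> S q \<Longrightarrow> sm c a + b \<in> S q"
  shows "T0_functional sm S (L S \<alpha> \<psi>)"
  unfolding T0_functional_def
  using L_lin[OF T0 cl] by (auto simp: L.simps)

lemma log_L:
  assumes T0: "T0_functional sm S \<psi>"
    and cl: "\<And>q c a b. a \<in> S q \<Longrightarrow> b \<in> S q \<Longrightarrow> sm c a + b \<in> S q"
    and m: "monic_weights \<alpha>"
  shows "log_alpha sm S \<alpha> \<psi> = L S \<alpha> \<psi>"
  unfolding log_alpha_def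
proof (rule the_equality)
  have z: "\<And>w. \<not> admissible S w \<Longrightarrow> \<psi> w = 0" using T0 by (simp add: T0_functional_def)
  show "T0_functional sm S (L S \<alpha> \<psi>) \<and> exp_alpha S \<alpha> (L S \<alpha> \<psi>) = \<psi>"
    using L_T0[OF T0 cl] exp_L[OF m, of S \<psi>] z by auto
next
  fix \<chi> assume "T0_functional sm S \<chi> \<and> exp_alpha S \<alpha> \<chi> = \<psi>"
  then show "\<chi> = L S \<alpha> \<psi>" using L_unique[OF _ _ m] by blast
qed



lemma phi_T0:
  assumes ca: "complex_algebra sm" and lf: "linear_functional sm \<phi>"
    and cl: "\<And>q c a b. a \<in> S q \<Longrightarrow> b \<in> S q \<Longrightarrow> sm c a + b \<in> S q"
  shows "T0_functional sm S (phi_hat S \<phi>)"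
  unfolding T0_functional_def
proof (intro conjI allI impI)
  fix w assume "\<not> admissible S w" then show "phi_hat S \<phi> w = 0" by (simp add: phi_hat_def)
next
  fix u v q a b c assume ab: "a \<in> S q" "b \<in> S q"
  have adm: "admissible S (u @ (q, sm c a + b) # v) = admissible S (u @ (q, a) # v)"
     "admissible S (u @ (q, b) # v) = admissible S (u @ (q, a) # v)"
    using adm_swap[of "sm c a + b" S q a u v] adm_swap[of b S q a u v] cl ab by auto
  have lp: "lprod (map snd (u @ (q, sm c a + b) # v)) = sm c (lprod (map snd (u @ (q, a) # v))) + lprod (map snd (u @ (q, b) # v))"
    using lprod_lin[OF ca, of "map snd u" c a b "map snd v"] by simp
  have l1: "\<phi> (x + y) = \<phi> x + \<phi> y" "\<phi> (sm c x) = c * \<phi> x" for x y using lf by (auto simp: linear_functional_def)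
  show "phi_hat S \<phi> (u @ (q, sm c a + b) # v) = c * phi_hat S \<phi> (u @ (q, a) # v) + phi_hat S \<phi> (u @ (q, b) # v)"
    unfolding phi_hat_def adm lp by (simp add: l1)
qed

lemma std_idx_less: "finite T \<Longrightarrow> x \<in> T \<Longrightarrow> y \<in> T \<Longrightarrow> x < y \<Longrightarrow> std_idx T x < std_idx T y"
  unfolding std_idx_def by (rule psubset_card_mono) auto

lemma std_idx_inj: "finite T \<Longrightarrow> inj_on (std_idx T) T"
  by (metis (no_types, lifting) inj_onI linorder_neqE_nat order_less_irrefl std_idx_less)

lemma std_idx_bij: "finite T \<Longrightarrow> bij_betw (std_idx T) T {0..<card T}"
proof -
  assume f: "finite T"
  have sub: "std_idx T ` T \<subseteq> {0..<card T}"
  proof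
    fix y assume "y \<in> std_idx T ` T"
    then obtain x where x: "x \<in> T" "y = std_idx T x" by auto
    have "{z\<in>T. z < x} \<subset> T" using x by auto
    then have "std_idx T x < card T" unfolding std_idx_def using f by (simp add: psubset_card_mono)
    then show "y \<in> {0..<card T}" using x by simp
  qed
  have "card (std_idx T ` T) = card T" using card_image[OF std_idx_inj[OF f]] .
  then have "std_idx T ` T = {0..<card T}" using sub by (intro card_subset_eq) auto
  then show ?thesis using std_idx_inj[OF f] by (simp add: bij_betw_def)
qed

lemma nths_relabel:
  assumes "finite T" "B \<subseteq> T"
  shows "nths (nths w T) (std_idx T ` B) = nths w B"
proof -
  have "{i \<in> T. \<exists>j \<in> std_idx T ` B. card {i' \<in> T. i' < i} = j} = B"
    using inj_on_image_mem_iff[OF std_idx_inj[OF assms(1)]] assms(2) unfolding std_idx_def[symmetric]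
    by (auto simp: std_idx_def)
  then show ?thesis by (simp add: nths_nths)
qed

lemma part_image:
  assumes b: "bij_betw h A A'" and p: "partition_on A Q"
  shows "partition_on A' ((`) h ` Q)"
proof -
  have "partition_on (h ` A) ((`) h ` Q - {{}})"
    using partition_on_inj_image[OF p] b by (auto simp: bij_betw_def)
  moreover have "(`) h ` Q - {{}} = (`) h ` Q" using partition_onD3[OF p] by auto
  moreover have "h ` A = A'" using b by (auto simp: bij_betw_def)
  ultimately show ?thesis by simp
qed

lemma part_remove:
  assumes p: "partition_on A P" and s: "{s} \<in> P"
  shows "partition_on (A - {s}) (P - {{s}})"
proof -
  have d: "disjnt {s} (\<Union>(P - {{s}}))"
    using part_uniq[OF p s] by (auto simp: disjnt_def)
  have "insert {s} (P - {{s}}) = P" using s by auto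
  then show ?thesis using partition_on_insert[OF d, of A] p by simp
qed

lemma ideal_gen_mem:
  assumes "g \<in> G"
  shows "x * g * y \<in> ideal_generated sm G" "g * y \<in> ideal_generated sm G" "x * g \<in> ideal_generated sm G"
  using assms unfolding ideal_generated_def is_ideal_def by blast+

lemma lprod_left_unit: "e * z = z \<Longrightarrow> e * lprod (z # zs) = lprod (z # zs)"
  by (cases zs) (auto simp: mult.assoc[symmetric])

lemma lprod_right_unit: "zs \<noteq> [] \<Longrightarrow> last zs * e = last zs \<Longrightarrow> lprod zs * e = lprod zs"
proof (induction zs)
  case (Cons z zs)
  then show ?case by (cases "zs = []") (auto simp: lprod_Cons mult.assoc)
qed simp



lemma unit_remove:
  fixes one :: "'f \<Rightarrow> 'a::ring"
  assumes lf: "linear_functional sm \<phi>"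
    and un: "\<And>Q. one Q \<in> S Q \<and> (\<forall>a\<in>S Q. one Q * a = a \<and> a * one Q = a)"
    and id: "\<And>x. x \<in> ideal_generated sm {one q - one Q | q Q. True} \<Longrightarrow> \<phi> x = 0"
    and adm: "admissible S (u @ (q, one q) # v)" and ne: "u @ v \<noteq> []"
  shows "phi_hat S \<phi> (u @ (q, one q) # v) = phi_hat S \<phi> (u @ v)"
proof -
  let ?I = "ideal_generated sm {one q - one Q | q Q. True}"
  have eqI: "\<phi> a = \<phi> b" if "a - b \<in> ?I" for a b
  proof -
    have "\<phi> a = \<phi> (a - b) + \<phi> b" using lf unfolding linear_functional_def by (metis diff_add_cancel)
    then show ?thesis using id[OF that] by simp
  qed
  have G: "one q - one Q \<in> {one q - one Q | q Q. True}" for q Q by blast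
  have adm2: "admissible S (u @ v)" using adm ne by (auto simp: admissible_def)
  have ent: "snd p \<in> S (fst p)" if "p \<in> set u \<or> p \<in> set v" for p using adm that by (auto simp: admissible_def)
  have main: "\<phi> (lprod (map snd u @ one q # map snd v)) = \<phi> (lprod (map snd u @ map snd v))"
  proof (cases "u = []")
    case True
    then obtain y v' where v: "v = y # v'" using ne by (cases v) auto
    have "one (fst y) * snd y = snd y" using un ent[of y] v by auto
    then have Y: "one (fst y) * lprod (map snd v) = lprod (map snd v)" using v lprod_left_unit by simp
    have "lprod (one q # map snd v) - lprod (map snd v) = (one q - one (fst y)) * lprod (map snd v)"
      using v Y by (simp add: lprod_Cons algebra_simps)
    then show ?thesis using True eqI ideal_gen_mem(2)[OF G] by simp
  next
    case False
    have "last u \<in> set u" using False by simp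
    then have "snd (last u) * one (fst (last u)) = snd (last u)" using un ent[of "last u"] by auto
    then have X: "lprod (map snd u) * one (fst (last u)) = lprod (map snd u)"
      using False lprod_right_unit[of "map snd u"] by (simp add: last_map)
    show ?thesis
    proof (cases "v = []")
      case True
      have "lprod (map snd u @ [one q]) - lprod (map snd u) = lprod (map snd u) * (one q - one (fst (last u)))"
        using False X by (simp add: lprod_append algebra_simps)
      then show ?thesis using True eqI ideal_gen_mem(3)[OF G] by simp
    next
      case vne: False
      have "lprod (map snd u @ one q # map snd v) - lprod (map snd u @ map snd v)
          = lprod (map snd u) * (one q - one (fst (last u))) * lprod (map snd v)"
      proof -
        have "lprod (map snd u @ one q # map snd v) = lprod (map snd u) * (one q * lprod (map snd v))"
          using False vne by (simp add: lprod_append lprod_Cons)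
        moreover have "lprod (map snd u @ map snd v) = (lprod (map snd u) * one (fst (last u))) * lprod (map snd v)"
          using False vne X by (simp add: lprod_append)
        ultimately show ?thesis by (simp add: algebra_simps)
      qed
      then show ?thesis using eqI ideal_gen_mem(1)[OF G] by simp
    qed
  qed
  show ?thesis unfolding phi_hat_def using adm adm2 main by simp
qed



lemma relabel_bij:
  assumes sn: "s < n"
  defines "T \<equiv> {0..<n} - {s}"
  shows "bij_betw (\<lambda>P. (\<lambda>B. std_idx T ` B) ` (P - {{s}}))
           {P. partition_on {0..<n} P \<and> {s} \<in> P} {P. partition_on {0..<n-1} P}"
proof -
  let ?r = "std_idx T"
  let ?r' = "the_inv_into T ?r"
  have fT: "finite T" by (simp add: T_def)
  have cT: "card T = n - 1" using sn by (simp add: T_def)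
  have br: "bij_betw ?r T {0..<n-1}" using std_idx_bij[OF fT] cT by simp
  have br': "bij_betw ?r' {0..<n-1} T" using bij_betw_the_inv_into[OF br] .
  have ir: "inj_on ?r T" using br by (simp add: bij_betw_def)
  have rT: "?r ` T = {0..<n-1}" using br by (simp add: bij_betw_def)
  show ?thesis
  proof (rule bij_betw_byWitness[where f'="\<lambda>P'. insert {s} ((\<lambda>B. ?r' ` B) ` P')"])
    show "\<forall>P\<in>{P. partition_on {0..<n} P \<and> {s} \<in> P}.
        insert {s} ((\<lambda>B. ?r' ` B) ` (\<lambda>B. ?r ` B) ` (P - {{s}})) = P"
    proof
      fix P assume P: "P \<in> {P. partition_on {0..<n} P \<and> {s} \<in> P}"
      have pr: "partition_on T (P - {{s}})" using part_remove P by (auto simp: T_def)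
      have "?r' ` ?r ` B = B" if "B \<in> P - {{s}}" for B
      proof -
        have "B \<subseteq> T" using block_sub[OF pr that] .
        then show ?thesis using the_inv_into_f_f[OF ir] by (auto simp: image_image subset_iff)
      qed
      then have "(\<lambda>B. ?r' ` B) ` (\<lambda>B. ?r ` B) ` (P - {{s}}) = P - {{s}}"
        by (simp add: image_image)
      then show "insert {s} ((\<lambda>B. ?r' ` B) ` (\<lambda>B. ?r ` B) ` (P - {{s}})) = P" using P by auto
    qed
  next
    show "\<forall>P'\<in>{P. partition_on {0..<n-1} P}.
        (\<lambda>B. ?r ` B) ` (insert {s} ((\<lambda>B. ?r' ` B) ` P') - {{s}}) = P'"
    proof
      fix P' assume P': "P' \<in> {P. partition_on {0..<n-1} P}"
      have pq: "partition_on T ((`) ?r' ` P')" using part_image[OF br'] P' by simp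
      have nin: "{s} \<notin> (`) ?r' ` P'" using block_sub[OF pq] by (auto simp: T_def)
      have "insert {s} ((\<lambda>B. ?r' ` B) ` P') - {{s}} = (\<lambda>B. ?r' ` B) ` P'" using nin by auto
      moreover have "?r ` ?r' ` B = B" if "B \<in> P'" for B
      proof -
        have "B \<subseteq> ?r ` T" using block_sub[OF _ that] P' rT by simp
        then show ?thesis using f_the_inv_into_f[OF ir] by (force simp: image_image)
      qed
      ultimately show "(\<lambda>B. ?r ` B) ` (insert {s} ((\<lambda>B. ?r' ` B) ` P') - {{s}}) = P'"
        by (simp add: image_image)
    qed
  next
    show "(\<lambda>P. (\<lambda>B. ?r ` B) ` (P - {{s}})) ` {P. partition_on {0..<n} P \<and> {s} \<in> P}
        \<subseteq> {P. partition_on {0..<n-1} P}"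
    proof
      fix P' assume "P' \<in> (\<lambda>P. (\<lambda>B. ?r ` B) ` (P - {{s}})) ` {P. partition_on {0..<n} P \<and> {s} \<in> P}"
      then obtain P where P: "partition_on {0..<n} P" "{s} \<in> P" and P': "P' = (\<lambda>B. ?r ` B) ` (P - {{s}})" by auto
      have pr: "partition_on T (P - {{s}})" using part_remove P by (auto simp: T_def)
      show "P' \<in> {P. partition_on {0..<n-1} P}" using part_image[OF br pr] P' by simp
    qed
  next
    show "(\<lambda>P'. insert {s} ((\<lambda>B. ?r' ` B) ` P')) ` {P. partition_on {0..<n-1} P}
        \<subseteq> {P. partition_on {0..<n} P \<and> {s} \<in> P}"
    proof
      fix P assume "P \<in> (\<lambda>P'. insert {s} ((\<lambda>B. ?r' ` B) ` P')) ` {P. partition_on {0..<n-1} P}"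
      then obtain P' where P': "partition_on {0..<n-1} P'" and P: "P = insert {s} ((\<lambda>B. ?r' ` B) ` P')" by auto
      have pq: "partition_on T ((`) ?r' ` P')" using part_image[OF br' P'] .
      have U: "\<Union>((`) ?r' ` P') = T" using partition_onD1[OF pq] by simp
      have d: "disjnt {s} (\<Union>((`) ?r' ` P'))" unfolding U by (simp add: T_def)
      have "partition_on {0..<n} (insert {s} ((`) ?r' ` P'))"
        using partition_on_insert[OF d, of "{0..<n}"] pq sn by (simp add: T_def)
      then show "P \<in> {P. partition_on {0..<n} P \<and> {s} \<in> P}" using P by simp
    qed
  qed
qed



lemma Pstar_one: "Pstar 1 = {}"
proof -
  have False if P: "partition_on {0..<1} P" "P \<noteq> {{0..<1}}" for P :: "nat set set"
  proof -
    have "\<exists>B\<in>P. (0::nat) \<in> B" using part_cover[OF P(1)] by simp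
    then obtain B where B: "B \<in> P" "0 \<in> B" by blast
    have "B \<subseteq> {0..<1}" using block_sub[OF P(1) B(1)] .
    then have "B = {0..<1}" using B(2) by auto
    then show False using one_block[OF P(1)] B(1) P(2) by simp
  qed
  then show ?thesis by (auto simp: Pstar_def)
qed

lemma exp_single:
  assumes m: "monic_weights \<alpha>" and a: "admissible S [p]"
  shows "exp_alpha S \<alpha> \<chi> [p] = \<chi> [p]"
proof -
  have "{P. partition_on {0..<1} P} = insert {{0..<1}} (Pstar 1)" by (rule parts_split) simp
  then have "{P. partition_on {0..<length [p]} P} = {{{0..<1}}}"
    unfolding Pstar_one by simp
  moreover have "\<alpha> [fst p] {{0..<length [fst p]}} = 1" using m unfolding monic_weights_def
    by (erule_tac x="[fst p]" in allE) simp
  ultimately show ?thesis using a by (simp add: exp_alpha_def)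
qed

lemma nths_mid_single: "nths (u @ x # v) {length u} = [x]"
proof -
  have "length (nths u {length u}) = 0" by (simp add: length_nths)
  moreover have "length (nths v {j. Suc (j + length u) \<in> {length u}}) = 0" by (simp add: length_nths)
  ultimately have "nths u {length u} = []" "nths v {j. Suc (j + length u) \<in> {length u}} = []" by simp_all
  then show ?thesis by (simp add: nths_mid_in)
qed

lemma nths_mid_remove: "nths (u @ x # v) ({0..<length (u @ x # v)} - {length u}) = u @ v"
proof -
  have "nths u ({0..<length (u @ x # v)} - {length u}) = u" by (rule nths_all) auto
  moreover have "nths v {j. Suc j + length u \<in> {0..<length (u @ x # v)} - {length u}} = v"
    by (rule nths_all) auto
  ultimately show ?thesis by (simp add: nths_append nths_Cons)
qed

lemma main_vanish:
  fixes \<chi> \<psi> :: "('f \<times> 'a) list \<Rightarrow> complex" and one :: "'f \<Rightarrow> 'a"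
  assumes E: "\<And>w. admissible S w \<Longrightarrow> exp_alpha S \<alpha> \<chi> w = \<psi> w"
    and m: "monic_weights \<alpha>" and si: "singleton_inductive \<alpha>"
    and uv: "\<And>p. admissible S [p] \<Longrightarrow> snd p = one (fst p) \<Longrightarrow> \<psi> [p] = 1"
    and rem: "\<And>u p v. admissible S (u @ p # v) \<Longrightarrow> snd p = one (fst p) \<Longrightarrow> u @ v \<noteq> [] \<Longrightarrow> \<psi> (u @ p # v) = \<psi> (u @ v)"
  shows "1 < length w \<Longrightarrow> admissible S w \<Longrightarrow> (\<exists>p\<in>set w. snd p = one (fst p)) \<Longrightarrow> \<chi> w = 0"
proof (induction "length w" arbitrary: w rule: less_induct)
  case less
  obtain p where p: "p \<in> set w" "snd p = one (fst p)" using less.prems(3) by blast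
  obtain u v where w: "w = u @ p # v" using split_list[OF p(1)] by blast
  define n where "n = length w"
  define s where "s = length u"
  define T where "T = {0..<n} - {s}"
  define w' where "w' = nths w T"
  have sn: "s < n" by (simp add: n_def s_def w)
  have n1: "1 < n" using less.prems(1) n_def by simp
  have w'eq: "w' = u @ v" unfolding w'_def T_def n_def s_def w by (rule nths_mid_remove)
  have lw': "length w' = n - 1" using w'eq by (simp add: n_def w)
  have ne': "u @ v \<noteq> []" using n1 by (auto simp: n_def w)
  have admw': "admissible S w'" using less.prems(2) ne' w'eq by (auto simp: admissible_def w)
  have admp: "admissible S [p]" using less.prems(2) p(1) by (auto simp: admissible_def)
  have fT: "finite T" by (simp add: T_def)
  define Fw where "Fw P = \<alpha> (map fst w) P * (\<Prod>B\<in>P. \<chi> (nths w B))" for P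
  define Gw where "Gw P = \<alpha> (map fst w') P * (\<Prod>B\<in>P. \<chi> (nths w' B))" for P
  define g where "g P = (\<lambda>B. std_idx T ` B) ` (P - {{s}})" for P
  define P1 where "P1 = {P. partition_on {0..<n} P \<and> {s} \<in> P}"
  define P2 where "P2 = {P. P \<in> Pstar n \<and> {s} \<notin> P}"
  have Pst: "Pstar n = P1 \<union> P2"
  proof -
    have "{s} \<noteq> {0..<n}"
    proof
      assume "{s} = {0..<n}"
      then have "0 \<in> {s}" "1 \<in> {s}" using n1 by auto
      then show False by simp
    qed
    then have "P1 \<subseteq> Pstar n" unfolding P1_def Pstar_def by auto
    then show ?thesis unfolding P2_def P1_def by (auto simp: Pstar_def)
  qed
  have disj: "P1 \<inter> P2 = {}" by (auto simp: P1_def P2_def)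
  have fin1: "finite P1" by (rule finite_subset[OF _ finite_Pstar[of n]]) (simp add: Pst)
  have fin2: "finite P2" by (rule finite_subset[OF _ finite_Pstar[of n]]) (simp add: Pst)
  have exp: "\<psi> w = Fw {{0..<n}} + (\<Sum>P\<in>P1. Fw P) + (\<Sum>P\<in>P2. Fw P)"
  proof -
    have "\<psi> w = (\<Sum>P\<in>{P. partition_on {0..<n} P}. Fw P)"
      using E[OF less.prems(2)] less.prems(2) by (simp add: exp_alpha_def Fw_def n_def)
    also have "\<dots> = Fw {{0..<n}} + (\<Sum>P\<in>Pstar n. Fw P)"
    proof -
      have notin: "{{0..<n}} \<notin> Pstar n" by (simp add: Pstar_def)
      have "n > 0" using n1 by simp
      then show ?thesis by (simp add: parts_split[of n] sum.insert[OF finite_Pstar notin])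
    qed
    also have "(\<Sum>P\<in>Pstar n. Fw P) = (\<Sum>P\<in>P1. Fw P) + (\<Sum>P\<in>P2. Fw P)"
      unfolding Pst by (rule sum.union_disjoint[OF fin1 fin2 disj])
    finally show ?thesis by simp
  qed
  have F0: "Fw {{0..<n}} = \<chi> w"
  proof -
    have "\<alpha> (map fst w) {{0..<n}} = 1" using m less.prems(2) unfolding monic_weights_def n_def
      by (metis admissible_def length_map map_is_Nil_conv)
    moreover have "nths w {0..<n} = w" by (simp add: nths_all n_def)
    ultimately show ?thesis by (simp add: Fw_def)
  qed
  have F2: "(\<Sum>P\<in>P2. Fw P) = 0"
  proof (rule sum.neutral, rule ballI)
    fix P assume P: "P \<in> P2"
    then have PS: "P \<in> Pstar n" and ns: "{s} \<notin> P" by (auto simp: P2_def)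
    have pp: "partition_on {0..<n} P" using PS by (simp add: Pstar_def)
    obtain B where B: "B \<in> P" "s \<in> B" using part_cover[OF pp, of s] sn by auto
    have Bsub: "B \<subseteq> {0..<n}" using block_sub[OF pp B(1)] .
    have "B \<noteq> {s}" using B ns by auto
    then obtain t where t: "t \<in> B" "t \<noteq> s" using B(2) by auto
    have "{s, t} \<subseteq> B" using B t by auto
    then have "card {s, t} \<le> card B" using Bsub by (intro card_mono) (auto intro: finite_subset)
    then have c2: "2 \<le> card B" using t by simp
    have lenB: "length (nths w B) = card B" using length_nths_sub[of B w] Bsub n_def by simp
    have short: "length (nths w B) < length w" using Pstar_shorter[of P w B] PS B n_def by simp
    have admB: "admissible S (nths w B)"
      using less.prems(2) set_nths_subset[of w B] lenB c2 unfolding admissible_def by auto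
    have "p \<in> set (nths w B)"
      unfolding set_nths using B(2) sn by (auto simp: w s_def n_def intro!: exI[of _ "length u"])
    then have "\<chi> (nths w B) = 0" using less.hyps[OF short _ admB] lenB c2 p(2) by auto
    then have "(\<Prod>B\<in>P. \<chi> (nths w B)) = 0"
      using B(1) finite_elements[OF _ pp] by (intro prod_zero) auto
    then show "Fw P = 0" by (simp add: Fw_def)
  qed
  have F1: "(\<Sum>P\<in>P1. Fw P) = \<psi> w'"
  proof -
    have eqG: "Fw P = Gw (g P)" if P: "P \<in> P1" for P
    proof -
      have pp: "partition_on {0..<n} P" and sP: "{s} \<in> P" using P by (auto simp: P1_def)
      have pr: "partition_on T (P - {{s}})" using part_remove[OF pp sP] by (simp add: T_def)
      have sub: "B \<subseteq> T" if "B \<in> P - {{s}}" for B using block_sub[OF pr that] .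
      have finP: "finite P" using finite_elements[OF _ pp] by simp
      have al: "\<alpha> (map fst w) P = \<alpha> (map fst w') (g P)"
        using si pp sP n1 unfolding singleton_inductive_def
        by (simp add: g_def T_def w'_def nths_map n_def)
      have single: "\<chi> (nths w {s}) = 1"
      proof -
        have "nths w {s} = [p]" unfolding w s_def by (rule nths_mid_single)
        then show ?thesis using exp_single[OF m admp, of \<chi>] E[OF admp] uv[OF admp p(2)] by simp
      qed
      have "(\<Prod>B\<in>P. \<chi> (nths w B)) = \<chi> (nths w {s}) * (\<Prod>B\<in>P - {{s}}. \<chi> (nths w B))"
        using prod.remove[OF finP sP] by simp
      also have "\<dots> = (\<Prod>B\<in>P - {{s}}. \<chi> (nths w' (std_idx T ` B)))"
      proof -
        have "(\<Prod>B\<in>P - {{s}}. \<chi> (nths w B)) = (\<Prod>B\<in>P - {{s}}. \<chi> (nths w' (std_idx T ` B)))"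
          by (rule prod.cong[OF refl]) (simp add: w'_def nths_relabel[OF fT sub])
        then show ?thesis using single by simp
      qed
      also have "\<dots> = (\<Prod>B'\<in>g P. \<chi> (nths w' B'))"
      proof -
        have "inj_on (\<lambda>B. std_idx T ` B) (P - {{s}})"
          using inj_on_subset[OF inj_on_image_Pow[OF std_idx_inj[OF fT]]] sub by blast
        then show ?thesis unfolding g_def by (simp add: prod.reindex)
      qed
      finally show ?thesis using al by (simp add: Fw_def Gw_def)
    qed
    have bj: "bij_betw g P1 {P. partition_on {0..<n-1} P}"
      unfolding g_def P1_def T_def using relabel_bij[OF sn] by simp
    have "(\<Sum>P\<in>P1. Fw P) = (\<Sum>P\<in>P1. Gw (g P))" using eqG by simp
    also have "\<dots> = (\<Sum>P'\<in>{P. partition_on {0..<n-1} P}. Gw P')" by (rule sum.reindex_bij_betw[OF bj])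
    also have "\<dots> = exp_alpha S \<alpha> \<chi> w'" using admw' lw' by (simp add: exp_alpha_def Gw_def)
    also have "\<dots> = \<psi> w'" using E[OF admw'] .
    finally show ?thesis .
  qed
  have "\<psi> w = \<psi> w'" using rem[of u p v] less.prems(2) p(2) ne' w'eq w by simp
  then show ?case using exp F0 F1 F2 by simp
qed


theorem lemma9p6:
  fixes sm :: "complex \<Rightarrow> 'a::ring \<Rightarrow> 'a"
    and S :: "'f::finite \<Rightarrow> 'a set"
    and one :: "'f \<Rightarrow> 'a"
    and \<phi> :: "'a \<Rightarrow> complex"
    and \<alpha> :: "'f list \<Rightarrow> nat set set \<Rightarrow> complex"
  assumes "monic_weights \<alpha>"
    and "singleton_inductive \<alpha>"
    and "multi_faced sm S"
    and "\<And>Q. one Q \<in> S Q \<and> (\<forall>a\<in>S Q. one Q * a = a \<and> a * one Q = a)"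
    and "linear_functional sm \<phi>"
    and "\<And>Q. \<phi> (one Q) = 1"
    and "\<And>x. x \<in> ideal_generated sm {one q - one Q | q Q. True} \<Longrightarrow> \<phi> x = 0"
    and "length w > 1"
    and "\<forall>l<length w. snd (w ! l) \<in> S (fst (w ! l))"
    and "s < length w"
    and "snd (w ! s) = one (fst (w ! s))"
  shows "log_alpha sm S \<alpha> (phi_hat S \<phi>) w = 0"
proof -
  have ca: "complex_algebra sm" using assms(3) by (simp add: multi_faced_def)
  have sub: "\<And>Q. subalgebra sm (S Q)" using assms(3) by (simp add: multi_faced_def)
  have cl: "sm c a + b \<in> S q" if "a \<in> S q" "b \<in> S q" for q c a b
    using sub[of q] that unfolding subalgebra_def by blast
  have T0: "T0_functional sm S (phi_hat S \<phi>)" by (rule phi_T0[OF ca assms(5) cl])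
  have logeq: "log_alpha sm S \<alpha> (phi_hat S \<phi>) = L S \<alpha> (phi_hat S \<phi>)"
    by (rule log_L[OF T0 cl assms(1)])
  have z: "\<And>w. \<not> admissible S w \<Longrightarrow> phi_hat S \<phi> w = 0" by (simp add: phi_hat_def)
  have E: "exp_alpha S \<alpha> (L S \<alpha> (phi_hat S \<phi>)) w = phi_hat S \<phi> w" for w
    by (rule exp_L[OF assms(1) z])
  have uv: "phi_hat S \<phi> [p] = 1" if "admissible S [p]" "snd p = one (fst p)" for p
    using that assms(6) by (simp add: phi_hat_def)
  have rem: "phi_hat S \<phi> (u @ p # v) = phi_hat S \<phi> (u @ v)"
    if "admissible S (u @ p # v)" "snd p = one (fst p)" "u @ v \<noteq> []" for u p v
  proof -
    have pe: "p = (fst p, one (fst p))" using that(2) by (metis prod.collapse)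
    show ?thesis using unit_remove[where one=one and sm=sm and \<phi>=\<phi> and S=S and u=u and q="fst p" and v=v, OF assms(5) assms(4) assms(7)] that pe by simp
  qed
  have adm: "admissible S w"
  proof -
    have "w \<noteq> []" using assms(8) by auto
    moreover have "\<forall>p\<in>set w. snd p \<in> S (fst p)" using assms(9) by (metis in_set_conv_nth)
    ultimately show ?thesis by (simp add: admissible_def)
  qed
  have ex: "\<exists>p\<in>set w. snd p = one (fst p)" using assms(10,11) nth_mem by blast
  show ?thesis unfolding logeq
    using main_vanish[of S \<alpha> "L S \<alpha> (phi_hat S \<phi>)" "phi_hat S \<phi>" one w, OF E assms(1,2) uv rem assms(8) adm ex]
    by simp
qed

end
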